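(* Suppose there exists a global Lyapunov function for the auxiliary flow $\Phi$, and suppose $f$ satisfies at least one of the following conditions: (a-1) for every set $B$ closed and bounded in $D$, $f|_B$ is proper; (a-2) $f$ is a local $C^1$ diffeomorphism and $\sup_{x\in B}\|f'(x)^{-1}\|<+\infty$ for every $B$ closed and bounded in $D$; (b) for every $B$ closed and bounded in $D$ and every $x\in B$, the connected components of $f^{-1}([f(x_0);f(x)])\cap B$ are compact ($[f(x_0);f(x)]$ being the line segment in $Y$); (c) for every $B$ closed and bounded in $D$ and every $x\in B$, if $\Phi(x,t)\in B$ for all $t>0$ with $(x,t)\in D_\Phi$, then the trajectory through $x$ is global in the future. Then $f$ is injective on $D$ and $f(D)$ is star-shaped with respect to $f(x_0)$.
   Context: Standing setting: $X,Y$ are real Banach spaces, $D\subseteq X$ is a nonempty open connected set, $f:D\to Y$ is a local homeomorphism (every point has an open neighbourhood mapped homeomorphically onto an open set), $x_0\in D$, $y_0=f(x_0)$. A flow in $D$ is a map $\Phi:D_\Phi\to D$ such that: (i) $D_\Phi$ is an open subset of $D\times\mathbb R$ and $\Phi$ is continuous; (ii) for each $x\in D$, $\{t:(x,t)\in D_\Phi\}$ is an interval containing $0$; (iii) $\Phi(x,0)=x$; (iv) if $(x,t_1),(x,t_1+t_2)\in D_\Phi$ then $(\Phi(x,t_1),t_2)\in D_\Phi$ and $\Phi(\Phi(x,t_1),t_2)=\Phi(x,t_1+t_2)$. The trajectory through $x$ is global in the future if $\{x\}\times[0,+\infty)\subseteq D_\Phi$. Let $\Psi(y,t)=y_0+e^{-t}(y-y_0)$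 for $y\in Y,t\in\mathbb R$. The auxiliary flow $\Phi$ is the unique flow in $D$ of maximal domain with $f(\Phi(x,t))=\Psi(f(x),t)$ for all $(x,t)\in D_\Phi$; for each $x$, $t\mapsto\Phi(x,t)$ is the maximal continuous lifting by $f$ of $t\mapsto\Psi(f(x),t)$ through $x$ at $t=0$. A set $B\subseteq D$ is bounded in $D$ if it is bounded in $X$ and its closure in $X$ is contained in $D$. A continuous $k:D\to[0,+\infty)$ is coercive if $k^{-1}([0,a])$ is bounded in $D$ for every $a>0$. A global Lyapunov function for $\Phi$ is a continuous, nonnegative, coercive $k:D\to[0,+\infty)$ such that $t\mapsto k(\Phi(x,t))$ is weakly decreasing for every $x\in D$. $f$ is a local $C^1$ diffeomorphism if it is $C^1$ and each point has an open neighbourhood mapped homeomorphically onto an open set with $C^1$ inverse. *)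

theory Defs
  imports "HOL-Analysis.Analysis"
begin

definition local_homeo :: "'a::topological_space set \<Rightarrow> ('a \<Rightarrow> 'b::topological_space) \<Rightarrow> bool" where
  "local_homeo D f \<longleftrightarrow> (\<forall>x\<in>D. \<exists>U g. open U \<and> x \<in> U \<and> U \<subseteq> D \<and> open (f ` U)
       \<and> homeomorphism U (f ` U) f g)"

definition is_flow :: "'a::topological_space set \<Rightarrow> ('a \<Rightarrow> real \<Rightarrow> 'a) \<Rightarrow> ('a \<times> real) set \<Rightarrow> bool" where
  "is_flow D Phi DPhi \<longleftrightarrow>
     DPhi \<subseteq> D \<times> UNIV \<and> open DPhi \<and> continuous_on DPhi (\<lambda>(x,t). Phi x t)
     \<and> (\<forall>(x,t)\<in>DPhi. Phi x t \<in> D)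
     \<and> (\<forall>x\<in>D. is_interval {t. (x,t) \<in> DPhi} \<and> (x,0) \<in> DPhi)
     \<and> (\<forall>x\<in>D. Phi x 0 = x)
     \<and> (\<forall>x t1 t2. (x,t1) \<in> DPhi \<longrightarrow> (x,t1+t2) \<in> DPhi \<longrightarrow>
          (Phi x t1, t2) \<in> DPhi \<and> Phi (Phi x t1) t2 = Phi x (t1+t2))"

definition Psi :: "'b::real_normed_vector \<Rightarrow> 'b \<Rightarrow> real \<Rightarrow> 'b" where
  "Psi y0 y t = y0 + exp (-t) *\<^sub>R (y - y0)"

definition lifts_Psi :: "'a::topological_space set \<Rightarrow> ('a \<Rightarrow> 'b::real_normed_vector) \<Rightarrow> 'a
     \<Rightarrow> ('a \<Rightarrow> real \<Rightarrow> 'a) \<Rightarrow> ('a \<times> real) set \<Rightarrow> bool" where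
  "lifts_Psi D f x0 Phi DPhi \<longleftrightarrow> is_flow D Phi DPhi \<and>
     (\<forall>(x,t)\<in>DPhi. f (Phi x t) = Psi (f x0) (f x) t)"

definition auxiliary_flow :: "'a::topological_space set \<Rightarrow> ('a \<Rightarrow> 'b::real_normed_vector) \<Rightarrow> 'a
     \<Rightarrow> ('a \<Rightarrow> real \<Rightarrow> 'a) \<Rightarrow> ('a \<times> real) set \<Rightarrow> bool" where
  "auxiliary_flow D f x0 Phi DPhi \<longleftrightarrow> lifts_Psi D f x0 Phi DPhi \<and>
     (\<forall>Phi' DPhi'. lifts_Psi D f x0 Phi' DPhi' \<longrightarrow> DPhi' \<subseteq> DPhi)"

definition bounded_in :: "'a::metric_space set \<Rightarrow> 'a set \<Rightarrow> bool" where
  "bounded_in D B \<longleftrightarrow> bounded B \<and> closure B \<subseteq> D"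

definition coercive_on :: "'a::metric_space set \<Rightarrow> ('a \<Rightarrow> real) \<Rightarrow> bool" where
  "coercive_on D k \<longleftrightarrow> (\<forall>a>0. bounded_in D {x\<in>D. k x \<le> a})"

definition global_lyapunov :: "'a::metric_space set \<Rightarrow> ('a \<Rightarrow> real \<Rightarrow> 'a) \<Rightarrow> ('a \<times> real) set
     \<Rightarrow> ('a \<Rightarrow> real) \<Rightarrow> bool" where
  "global_lyapunov D Phi DPhi k \<longleftrightarrow> continuous_on D k \<and> (\<forall>x\<in>D. 0 \<le> k x) \<and> coercive_on D k
     \<and> (\<forall>x\<in>D. \<forall>s t. (x,s) \<in> DPhi \<longrightarrow> (x,t) \<in> DPhi \<longrightarrow> s \<le> t \<longrightarrow> k (Phi x t) \<le> k (Phi x s))"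

definition C1_on :: "'a::real_normed_vector set \<Rightarrow> ('a \<Rightarrow> 'b::real_normed_vector) \<Rightarrow> ('a \<Rightarrow> 'a \<Rightarrow>\<^sub>L 'b) \<Rightarrow> bool" where
  "C1_on D f f' \<longleftrightarrow> (\<forall>x\<in>D. (f has_derivative blinfun_apply (f' x)) (at x)) \<and> continuous_on D f'"

definition local_C1_diffeo :: "'a::real_normed_vector set \<Rightarrow> ('a \<Rightarrow> 'b::real_normed_vector) \<Rightarrow> ('a \<Rightarrow> 'a \<Rightarrow>\<^sub>L 'b) \<Rightarrow> bool" where
  "local_C1_diffeo D f f' \<longleftrightarrow> C1_on D f f' \<and>
     (\<forall>x\<in>D. \<exists>U g g'. open U \<and> x \<in> U \<and> U \<subseteq> D \<and> open (f ` U)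
        \<and> homeomorphism U (f ` U) f g \<and> C1_on (f ` U) g g')"

definition proper_on :: "'a::topological_space set \<Rightarrow> ('a \<Rightarrow> 'b::topological_space) \<Rightarrow> bool" where
  "proper_on B f \<longleftrightarrow> (\<forall>K. compact K \<longrightarrow> compact (B \<inter> f -` K))"

definition cond_a1 where
  "cond_a1 D f \<longleftrightarrow> (\<forall>B. closed B \<and> bounded_in D B \<longrightarrow> proper_on B f)"

definition cond_a2 :: "'a::real_normed_vector set \<Rightarrow> ('a \<Rightarrow> 'b::real_normed_vector) \<Rightarrow> bool" where
  "cond_a2 D f \<longleftrightarrow> (\<exists>f'. local_C1_diffeo D f f' \<and>
     (\<forall>B. closed B \<and> bounded_in D B \<longrightarrow>
        (\<exists>M. \<forall>x\<in>B. \<exists>L. L o\<^sub>L f' x = id_blinfun \<and> f' x o\<^sub>L L = id_blinfun \<and> norm L \<le> M)))"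

definition cond_b :: "'a::real_normed_vector set \<Rightarrow> ('a \<Rightarrow> 'b::real_normed_vector) \<Rightarrow> 'a \<Rightarrow> bool" where
  "cond_b D f x0 \<longleftrightarrow> (\<forall>B. closed B \<and> bounded_in D B \<longrightarrow> (\<forall>x\<in>B.
     \<forall>C \<in> components ({z\<in>D. f z \<in> closed_segment (f x0) (f x)} \<inter> B). compact C))"

definition cond_c :: "'a::metric_space set \<Rightarrow> ('a \<Rightarrow> real \<Rightarrow> 'a) \<Rightarrow> ('a \<times> real) set \<Rightarrow> bool" where
  "cond_c D Phi DPhi \<longleftrightarrow> (\<forall>B. closed B \<and> bounded_in D B \<longrightarrow> (\<forall>x\<in>B.
     (\<forall>t>0. (x,t) \<in> DPhi \<longrightarrow> Phi x t \<in> B) \<longrightarrow> {x} \<times> {0..} \<subseteq> DPhi))"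

end

theory Submission
  imports Defs
begin

lemma Psi_comp: "Psi y0 (Psi y0 y a) b = Psi y0 y (a + b)"
proof -
  have "exp (- (a + b)) = exp (-b) * exp (-a)" by (simp add: exp_add[symmetric])
  then show ?thesis by (simp add: Psi_def)
qed

lemma Psi_0[simp]: "Psi y0 y 0 = y"
  by (simp add: Psi_def)

lemma local_homeo_cont:
  fixes f :: "'a::metric_space \<Rightarrow> 'b::metric_space"
  assumes "open D" "local_homeo D f" shows "continuous_on D f"
proof -
  have "isCont f x" if "x \<in> D" for x
  proof -
    have "\<exists>U g. open U \<and> x \<in> U \<and> U \<subseteq> D \<and> open (f ` U) \<and> homeomorphism U (f ` U) f g"
      using assms(2) that unfolding local_homeo_def by (rule bspec)
    then obtain U g where U: "open U" "x \<in> U" "homeomorphism U (f ` U) f g"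
      by blast
    have "continuous_on U f" using homeomorphism_cont1[OF U(3)] .
    then show ?thesis using U(1,2) by (simp add: continuous_on_eq_continuous_at)
  qed
  then show ?thesis using assms(1) by (simp add: continuous_on_eq_continuous_at)
qed

lemma lift_unique:
  fixes \<gamma>1 \<gamma>2 :: "real \<Rightarrow> 'a::metric_space"
  assumes lh: "local_homeo D f" and I: "connected I"
    and c1: "continuous_on I \<gamma>1" and c2: "continuous_on I \<gamma>2"
    and D1: "\<gamma>1 ` I \<subseteq> D" and D2: "\<gamma>2 ` I \<subseteq> D"
    and ff: "\<forall>u\<in>I. f (\<gamma>1 u) = f (\<gamma>2 u)" and a: "a \<in> I" "\<gamma>1 a = \<gamma>2 a"
    and u: "u \<in> I"
  shows "\<gamma>1 u = \<gamma>2 u"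
proof -
  define E where "E = {u\<in>I. dist (\<gamma>1 u) (\<gamma>2 u) = 0}"
  have cl: "closedin (top_of_set I) E"
    unfolding E_def by (intro continuous_closedin_preimage_constant continuous_on_dist c1 c2)
  have op: "openin (top_of_set I) E"
    unfolding openin_euclidean_subtopology_iff
  proof (intro conjI ballI)
    show "E \<subseteq> I" by (auto simp: E_def)
    fix x assume "x \<in> E"
    then have xI: "x \<in> I" and eq: "\<gamma>1 x = \<gamma>2 x" by (auto simp: E_def)
    obtain U g where U: "open U" "\<gamma>1 x \<in> U" "U \<subseteq> D" "homeomorphism U (f ` U) f g"
      using lh D1 xI unfolding local_homeo_def by blast
    obtain e where e: "e > 0" "ball (\<gamma>1 x) e \<subseteq> U" using U open_contains_ball by blast
    obtain d1 where d1: "d1 > 0" "\<forall>x'\<in>I. dist x' x < d1 \<longrightarrow> dist (\<gamma>1 x') (\<gamma>1 x) < e"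
      using c1 xI e(1) unfolding continuous_on_iff by blast
    obtain d2 where d2: "d2 > 0" "\<forall>x'\<in>I. dist x' x < d2 \<longrightarrow> dist (\<gamma>2 x') (\<gamma>2 x) < e"
      using c2 xI e(1) unfolding continuous_on_iff by blast
    show "\<exists>e>0. \<forall>x'\<in>I. dist x' x < e \<longrightarrow> x' \<in> E"
    proof (intro exI[of _ "min d1 d2"] conjI ballI impI)
      show "min d1 d2 > 0" using d1 d2 by simp
      fix x' assume x': "x' \<in> I" "dist x' x < min d1 d2"
      have "dist (\<gamma>1 x') (\<gamma>1 x) < e" using d1(2) x' by simp
      then have "\<gamma>1 x' \<in> U" using e(2) by (auto simp: dist_commute)
      moreover have "dist (\<gamma>2 x') (\<gamma>2 x) < e" using d2(2) x' by simp
      then have "\<gamma>2 x' \<in> U" using e(2) eq by (auto simp: dist_commute)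
      moreover have gf: "\<forall>y\<in>U. g (f y) = y" using homeomorphism_apply1[OF U(4)] by blast
      moreover have "f (\<gamma>1 x') = f (\<gamma>2 x')" using ff x'(1) by blast
      ultimately have "\<gamma>1 x' = \<gamma>2 x'" by metis
      then show "x' \<in> E" using x' by (simp add: E_def)
    qed
  qed
  have "E = {} \<or> E = I" using connected_clopen I op cl by blast
  moreover have "a \<in> E" using a by (simp add: E_def)
  ultimately have "E = I" by blast
  then show ?thesis using u by (auto simp: E_def)
qed

locale auxf =
  fixes D :: "'a::banach set" and f :: "'a \<Rightarrow> 'b::banach" and x0 :: 'a
    and Phi :: "'a \<Rightarrow> real \<Rightarrow> 'a" and P :: "('a \<times> real) set"
  assumes oD: "open D" and lh: "local_homeo D f" and x0D: "x0 \<in> D"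
    and aux: "auxiliary_flow D f x0 Phi P"
begin

abbreviation "y0 \<equiv> f x0"

lemma flow: "is_flow D Phi P" using aux by (simp add: auxiliary_flow_def lifts_Psi_def)

lemma P_D1: "(z,t) \<in> P \<Longrightarrow> z \<in> D" using flow by (auto simp: is_flow_def)
lemma P_D2: "(z,t) \<in> P \<Longrightarrow> Phi z t \<in> D" using flow by (auto simp: is_flow_def)
lemma P_0: "z \<in> D \<Longrightarrow> (z,0) \<in> P" using flow by (auto simp: is_flow_def)
lemma Phi_0[simp]: "z \<in> D \<Longrightarrow> Phi z 0 = z" using flow by (auto simp: is_flow_def)
lemma P_int: "z \<in> D \<Longrightarrow> is_interval {t. (z,t) \<in> P}" using flow by (auto simp: is_flow_def)
lemma P_open: "open P" using flow by (auto simp: is_flow_def)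
lemma P_cont: "continuous_on P (\<lambda>(x,t). Phi x t)" using flow by (auto simp: is_flow_def)
lemma grp: "(x,t1) \<in> P \<Longrightarrow> (x,t1+t2) \<in> P \<Longrightarrow> (Phi x t1, t2) \<in> P \<and> Phi (Phi x t1) t2 = Phi x (t1+t2)"
  using flow unfolding is_flow_def by blast
lemma liftP: "(z,t) \<in> P \<Longrightarrow> f (Phi z t) = Psi y0 (f z) t"
  using aux by (auto simp: auxiliary_flow_def lifts_Psi_def)
lemma maxP: "lifts_Psi D f x0 Phi' P' \<Longrightarrow> P' \<subseteq> P"
  using aux by (auto simp: auxiliary_flow_def)

lemma P_between: "(z,t) \<in> P \<Longrightarrow> u \<in> closed_segment 0 t \<Longrightarrow> (z,u) \<in> P"
proof -
  assume zt: "(z,t) \<in> P" and u: "u \<in> closed_segment 0 t"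
  have zD: "z \<in> D" using P_D1[OF zt] .
  have I: "is_interval {t. (z,t) \<in> P}" using P_int[OF zD] .
  have 0: "0 \<in> {t. (z,t) \<in> P}" using P_0[OF zD] by simp
  have t: "t \<in> {t. (z,t) \<in> P}" using zt by simp
  show "(z,u) \<in> P"
  proof (cases "0 \<le> t")
    case True
    then have "0 \<le> u \<and> u \<le> t" using u by (simp add: closed_segment_eq_real_ivl)
    then show ?thesis using I 0 t unfolding is_interval_1 by blast
  next
    case False
    then have "t \<le> u \<and> u \<le> 0" using u by (simp add: closed_segment_eq_real_ivl)
    then show ?thesis using I 0 t unfolding is_interval_1 by blast
  qed
qed

lemma cont_traj: "S \<subseteq> {t. (z,t) \<in> P} \<Longrightarrow> continuous_on S (Phi z)"
proof -
  assume S: "S \<subseteq> {t. (z,t) \<in> P}"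
  have "continuous_on S (\<lambda>u. (\<lambda>(x,t). Phi x t) (z, u))"
    by (rule continuous_on_compose2[OF P_cont continuous_on_Pair[OF continuous_on_const continuous_on_id]])
       (use S in auto)
  then show ?thesis by simp
qed

lemma fcont: "continuous_on D f" using local_homeo_cont[OF oD lh] .

inductive reach :: "'a \<Rightarrow> real \<Rightarrow> 'a \<Rightarrow> bool" where
  base: "(z,t) \<in> P \<Longrightarrow> reach z t (Phi z t)"
| step: "reach z s w \<Longrightarrow> (w,t) \<in> P \<Longrightarrow> reach z (s+t) (Phi w t)"

lemma reach_D: "reach z s w \<Longrightarrow> z \<in> D \<and> w \<in> D"
  by (induction rule: reach.induct) (metis P_D1 P_D2)+

lemma reach_f: "reach z s w \<Longrightarrow> f w = Psi y0 (f z) s"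
  by (induction rule: reach.induct) (auto simp: liftP Psi_comp)

lemma reach_trans: "reach b s' c \<Longrightarrow> reach a s b \<Longrightarrow> reach a (s+s') c"
proof (induction rule: reach.induct)
  case (base z t) then show ?case using reach.step by blast
next
  case (step z s1 w t)
  then have "reach a (s + s1 + t) (Phi w t)" using reach.step by blast
  then show ?case by (simp add: add.assoc)
qed

lemma reach_rev: "reach z s w \<Longrightarrow> reach w (-s) z"
proof (induction rule: reach.induct)
  case (base z t)
  have "(z, t + (-t)) \<in> P" using base P_0 P_D1 by auto
  then have "(Phi z t, -t) \<in> P \<and> Phi (Phi z t) (-t) = Phi z (t + -t)" using grp base by blast
  then show ?case using reach.base[of "Phi z t" "-t"] P_D1[OF base] by simp
next
  case (step z s w t)
  have "(w, t + (-t)) \<in> P" using step P_0 P_D1 by auto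
  then have "(Phi w t, -t) \<in> P \<and> Phi (Phi w t) (-t) = Phi w (t + -t)" using grp step by blast
  then have "reach (Phi w t) (-t) w" using reach.base[of "Phi w t" "-t"] P_D1[OF step(2)] by simp
  from reach_trans[OF step(3) this] show ?case by (simp add: add.commute)
qed


lemma seg_shift: "u \<in> closed_segment s (s+t) \<Longrightarrow> u - s \<in> closed_segment (0::real) t"
  by (auto simp: closed_segment_eq_real_ivl split: if_splits)

lemma seg_split: "u \<in> closed_segment 0 (s+t) \<Longrightarrow> u \<in> closed_segment (0::real) s \<or> u \<in> closed_segment s (s+t)"
  by (auto simp: closed_segment_eq_real_ivl split: if_splits)

lemma reach_seg: "reach z s w \<Longrightarrow> u \<in> closed_segment 0 s \<Longrightarrow> \<exists>w'. reach z u w'"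
proof (induction arbitrary: u rule: reach.induct)
  case (base z t)
  then show ?case using P_between reach.base by blast
next
  case (step z s w t)
  show ?case
  proof (cases "u \<in> closed_segment 0 s")
    case True then show ?thesis using step by blast
  next
    case False
    then have "u \<in> closed_segment s (s+t)" using seg_split step(4) by blast
    then have "u - s \<in> closed_segment 0 t" by (rule seg_shift)
    then have "(w, u - s) \<in> P" using P_between step(2) by blast
    then have "reach z (s + (u - s)) (Phi w (u - s))" using reach.step[OF step(1)] by blast
    then show ?thesis by auto
  qed
qed

lemma reach_path: "reach z s w \<Longrightarrow> \<exists>\<gamma>. continuous_on (closed_segment 0 s) \<gamma> \<and> \<gamma> ` closed_segment 0 s \<subseteq> D
   \<and> \<gamma> 0 = z \<and> \<gamma> s = w \<and> (\<forall>u\<in>closed_segment 0 s. f (\<gamma> u) = Psi y0 (f z) u)"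
proof (induction rule: reach.induct)
  case (base z t)
  have zD: "z \<in> D" using P_D1[OF base] .
  have sub: "closed_segment 0 t \<subseteq> {u. (z,u) \<in> P}" using P_between base by blast
  show ?case
  proof (intro exI[of _ "Phi z"] conjI ballI)
    show "continuous_on (closed_segment 0 t) (Phi z)" using cont_traj[OF sub] .
    show "Phi z ` closed_segment 0 t \<subseteq> D" using sub P_D2 by blast
    show "Phi z 0 = z" using zD by simp
    show "Phi z t = Phi z t" ..
    fix u assume "u \<in> closed_segment 0 t"
    then show "f (Phi z u) = Psi y0 (f z) u" using sub liftP by blast
  qed
next
  case (step z s w t)
  obtain \<gamma> where g: "continuous_on (closed_segment 0 s) \<gamma>" "\<gamma> ` closed_segment 0 s \<subseteq> D"
    "\<gamma> 0 = z" "\<gamma> s = w" "\<forall>u\<in>closed_segment 0 s. f (\<gamma> u) = Psi y0 (f z) u"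
    using step.IH by blast
  define S0 where "S0 = closed_segment (0::real) s"
  define T where "T = closed_segment s (s+t)"
  define \<delta> where "\<delta> = (\<lambda>u. Phi w (u - s))"
  have wD: "w \<in> D" using P_D1[OF step(2)] .
  have sS0: "s \<in> S0" "0 \<in> S0" by (auto simp: S0_def)
  have sT: "s \<in> T" "s + t \<in> T" by (auto simp: T_def)
  have fw: "f w = Psi y0 (f z) s" using g(4,5) sS0 by (auto simp: S0_def)
  have TP: "(w, u - s) \<in> P" if "u \<in> T" for u
    using P_between[OF step(2) seg_shift] that by (simp add: T_def)
  have dcont: "continuous_on T \<delta>"
  proof -
    have "continuous_on T (\<lambda>u. (\<lambda>(x,t). Phi x t) (w, u - s))"
      by (rule continuous_on_compose2[OF P_cont]) (auto intro!: continuous_intros TP)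
    then show ?thesis by (simp add: \<delta>_def)
  qed
  have dD: "\<delta> ` T \<subseteq> D" using TP P_D2 by (auto simp: \<delta>_def)
  have df: "f (\<delta> u) = Psi y0 (f z) u" if "u \<in> T" for u
    using liftP[OF TP[OF that]] fw Psi_comp[of y0 "f z" s "u - s"] by (simp add: \<delta>_def)
  have ds: "\<delta> s = w" using wD by (simp add: \<delta>_def)
  have agree: "\<gamma> u = \<delta> u" if "u \<in> S0 \<inter> T" for u
  proof (rule lift_unique[OF lh, of "S0 \<inter> T" \<gamma> \<delta> s u])
    show "connected (S0 \<inter> T)" unfolding S0_def T_def
      by (intro convex_connected convex_Int convex_closed_segment)
    show "continuous_on (S0 \<inter> T) \<gamma>" using g(1) by (rule continuous_on_subset) (auto simp: S0_def)
    show "continuous_on (S0 \<inter> T) \<delta>" using dcont by (rule continuous_on_subset) auto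
    show "\<gamma> ` (S0 \<inter> T) \<subseteq> D" using g(2) by (auto simp: S0_def)
    show "\<delta> ` (S0 \<inter> T) \<subseteq> D" using dD by auto
    show "\<forall>u\<in>S0 \<inter> T. f (\<gamma> u) = f (\<delta> u)" using g(5) df by (auto simp: S0_def)
    show "s \<in> S0 \<inter> T" using sS0 sT by auto
    show "\<gamma> s = \<delta> s" using g(4) ds by simp
    show "u \<in> S0 \<inter> T" using that .
  qed
  define \<gamma>' where "\<gamma>' = (\<lambda>u. if u \<in> S0 then \<gamma> u else \<delta> u)"
  have c': "continuous_on (S0 \<union> T) \<gamma>'" unfolding \<gamma>'_def
  proof (rule continuous_on_cases)
    show "closed S0" "closed T" unfolding S0_def T_def by (auto intro: compact_imp_closed compact_segment)
    show "continuous_on S0 \<gamma>" using g(1) by (simp add: S0_def)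
    show "continuous_on T \<delta>" using dcont .
    show "\<forall>x. x \<in> S0 \<and> \<not> x \<in> S0 \<or> x \<in> T \<and> x \<in> S0 \<longrightarrow> \<gamma> x = \<delta> x" using agree by blast
  qed
  have sub: "closed_segment 0 (s+t) \<subseteq> S0 \<union> T" using seg_split by (auto simp: S0_def T_def)
  show ?case
  proof (intro exI[of _ \<gamma>'] conjI ballI)
    show "continuous_on (closed_segment 0 (s + t)) \<gamma>'" using c' sub by (rule continuous_on_subset)
    show "\<gamma>' ` closed_segment 0 (s + t) \<subseteq> D" using sub g(2) dD by (auto simp: \<gamma>'_def S0_def)
    show "\<gamma>' 0 = z" using sS0 g(3) by (simp add: \<gamma>'_def)
    show "\<gamma>' (s + t) = Phi w t"
      using agree[of "s+t"] sT by (simp add: \<gamma>'_def \<delta>_def)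
    fix u assume "u \<in> closed_segment 0 (s + t)"
    then show "f (\<gamma>' u) = Psi y0 (f z) u" using sub g(5) df by (auto simp: \<gamma>'_def S0_def)
  qed
qed

lemma reach_unique: "reach z s w \<Longrightarrow> reach z s w' \<Longrightarrow> w = w'"
proof -
  assume r1: "reach z s w" and r2: "reach z s w'"
  obtain \<gamma>1 where g1: "continuous_on (closed_segment 0 s) \<gamma>1" "\<gamma>1 ` closed_segment 0 s \<subseteq> D"
    "\<gamma>1 0 = z" "\<gamma>1 s = w" "\<forall>u\<in>closed_segment 0 s. f (\<gamma>1 u) = Psi y0 (f z) u"
    using reach_path[OF r1] by blast
  obtain \<gamma>2 where g2: "continuous_on (closed_segment 0 s) \<gamma>2" "\<gamma>2 ` closed_segment 0 s \<subseteq> D"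
    "\<gamma>2 0 = z" "\<gamma>2 s = w'" "\<forall>u\<in>closed_segment 0 s. f (\<gamma>2 u) = Psi y0 (f z) u"
    using reach_path[OF r2] by blast
  have "\<gamma>1 s = \<gamma>2 s"
    by (rule lift_unique[OF lh connected_segment g1(1) g2(1) g1(2) g2(2), of 0]) (use g1 g2 in auto)
  then show "w = w'" using g1 g2 by simp
qed


lemma reach_open: "reach z s w \<Longrightarrow> \<exists>N h. open N \<and> (z,s) \<in> N \<and> continuous_on N h \<and> (\<forall>q\<in>N. reach (fst q) (snd q) (h q))"
proof (induction rule: reach.induct)
  case (base z t)
  show ?case
  proof (intro exI[of _ P] exI[of _ "\<lambda>(x,t). Phi x t"] conjI ballI)
    show "open P" by (rule P_open)
    show "(z,t) \<in> P" by (rule base)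
    show "continuous_on P (\<lambda>(x,t). Phi x t)" by (rule P_cont)
    fix q assume q: "q \<in> P"
    obtain a b where qab: "q = (a,b)" by (cases q)
    show "reach (fst q) (snd q) ((\<lambda>(x,t). Phi x t) q)" using q qab reach.base by simp
  qed
next
  case (step z s w t)
  obtain N h where N: "open N" "(z,s) \<in> N" "continuous_on N h" "\<forall>q\<in>N. reach (fst q) (snd q) (h q)"
    using step.IH by blast
  define m where "m = (\<lambda>q::'a\<times>real. (fst q, snd q - t))"
  define N1 where "N1 = m -` N"
  have mc: "continuous_on UNIV m" unfolding m_def by (intro continuous_intros)
  have oN1: "open N1" unfolding N1_def by (rule open_vimage[OF N(1) mc])
  have c1: "continuous_on N1 (\<lambda>q. (h (m q), t))"
  proof (intro continuous_on_Pair continuous_on_const)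
    show "continuous_on N1 (\<lambda>q. h (m q))"
      by (rule continuous_on_compose2[OF N(3) continuous_on_subset[OF mc]]) (auto simp: N1_def)
  qed
  define N' where "N' = (\<lambda>q. (h (m q), t)) -` P \<inter> N1"
  have oN': "open N'" using continuous_on_open_vimage[OF oN1] c1 P_open unfolding N'_def by blast
  have hzs: "h (z,s) = w" using N(2,4) reach_unique[OF step(1)] by fastforce
  show ?case
  proof (intro exI[of _ N'] exI[of _ "\<lambda>q. Phi (h (m q)) t"] conjI ballI)
    show "open N'" by (rule oN')
    show "(z, s + t) \<in> N'" using N(2) hzs step(2) by (simp add: N'_def N1_def m_def)
    have "continuous_on N' (\<lambda>q. (\<lambda>(x,t). Phi x t) ((\<lambda>q. (h (m q), t)) q))"
      by (rule continuous_on_compose2[OF P_cont continuous_on_subset[OF c1]]) (auto simp: N'_def)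
    then show "continuous_on N' (\<lambda>q. Phi (h (m q)) t)" by simp
    fix q assume q: "q \<in> N'"
    then have "m q \<in> N" "(h (m q), t) \<in> P" by (auto simp: N'_def N1_def)
    then have "reach (fst q) (snd q - t) (h (m q))" using N(4) by (force simp: m_def)
    from reach.step[OF this \<open>(h (m q), t) \<in> P\<close>]
    show "reach (fst q) (snd q) (Phi (h (m q)) t)" by simp
  qed
qed

definition Q where "Q = {(z,s). \<exists>w. reach z s w}"
definition Phi' where "Phi' z s = (THE w. reach z s w)"

lemma Phi'_reach: "reach z s w \<Longrightarrow> Phi' z s = w"
  unfolding Phi'_def using reach_unique by blast

lemma Q_open: "open Q"
proof (subst open_subopen, intro ballI)
  fix q assume "q \<in> Q"
  then obtain z s w where q: "q = (z,s)" "reach z s w" by (auto simp: Q_def)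
  obtain N h where N: "open N" "(z,s) \<in> N" "continuous_on N h" "\<forall>q\<in>N. reach (fst q) (snd q) (h q)"
    using reach_open[OF q(2)] by blast
  have "N \<subseteq> Q" using N(4) by (force simp: Q_def)
  then show "\<exists>T. open T \<and> q \<in> T \<and> T \<subseteq> Q" using N q by blast
qed

lemma Q_cont: "continuous_on Q (\<lambda>(x,t). Phi' x t)"
proof (subst continuous_on_eq_continuous_at[OF Q_open], intro ballI)
  fix q assume "q \<in> Q"
  then obtain z s w where q: "q = (z,s)" "reach z s w" by (auto simp: Q_def)
  obtain N h where N: "open N" "(z,s) \<in> N" "continuous_on N h" "\<forall>q\<in>N. reach (fst q) (snd q) (h q)"
    using reach_open[OF q(2)] by blast
  have "continuous_on N (\<lambda>(x,t). Phi' x t)"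
  proof (rule continuous_on_eq[OF N(3)])
    fix p assume "p \<in> N"
    then have "reach (fst p) (snd p) (h p)" using N(4) by blast
    then show "h p = (\<lambda>(x,t). Phi' x t) p" using Phi'_reach by (simp add: split_beta)
  qed
  then show "isCont (\<lambda>(x,t). Phi' x t) q" using N(1,2) q(1) continuous_on_eq_continuous_at by blast
qed

lemma Q_lifts: "lifts_Psi D f x0 Phi' Q"
  unfolding lifts_Psi_def is_flow_def
proof (intro conjI ballI allI impI)
  show "Q \<subseteq> D \<times> UNIV" using reach_D by (auto simp: Q_def)
  show "open Q" by (rule Q_open)
  show "continuous_on Q (\<lambda>(x,t). Phi' x t)" by (rule Q_cont)
  fix q assume "q \<in> Q"
  then obtain z s w where q: "q = (z,s)" "reach z s w" by (auto simp: Q_def)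
  show "(case q of (x, t) \<Rightarrow> Phi' x t \<in> D)" using q reach_D Phi'_reach by simp
  show "(case q of (x, t) \<Rightarrow> f (Phi' x t) = Psi (f x0) (f x) t)" using q reach_f Phi'_reach by simp
next
  fix x assume xD: "x \<in> D"
  have r0: "reach x 0 x" using reach.base[OF P_0[OF xD]] xD by simp
  then show "(x,0) \<in> Q" by (auto simp: Q_def)
  show "Phi' x 0 = x" using Phi'_reach[OF r0] .
  show "is_interval {t. (x, t) \<in> Q}" unfolding is_interval_1
  proof (intro ballI allI impI)
    fix a b c assume a: "a \<in> {t. (x, t) \<in> Q}" and b: "b \<in> {t. (x, t) \<in> Q}" and c: "a \<le> c \<and> c \<le> b"
    obtain wa wb where ra: "reach x a wa" and rb: "reach x b wb" using a b by (auto simp: Q_def)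
    show "c \<in> {t. (x, t) \<in> Q}"
    proof (cases "0 \<le> c")
      case True
      then have "c \<in> closed_segment 0 b" using c by (auto simp: closed_segment_eq_real_ivl)
      then show ?thesis using reach_seg[OF rb] by (auto simp: Q_def)
    next
      case False
      then have "c \<in> closed_segment 0 a" using c by (auto simp: closed_segment_eq_real_ivl)
      then show ?thesis using reach_seg[OF ra] by (auto simp: Q_def)
    qed
  qed
next
  fix x t1 t2 assume a1: "(x, t1) \<in> Q" and a2: "(x, t1 + t2) \<in> Q"
  obtain w1 w2 where r1: "reach x t1 w1" and r2: "reach x (t1+t2) w2" using a1 a2 by (auto simp: Q_def)
  have "reach w1 (-t1 + (t1+t2)) w2" using reach_trans[OF r2 reach_rev[OF r1]] .
  then have r3: "reach w1 t2 w2" by simp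
  show "(Phi' x t1, t2) \<in> Q" using r3 Phi'_reach[OF r1] by (auto simp: Q_def)
  show "Phi' (Phi' x t1) t2 = Phi' x (t1 + t2)" using Phi'_reach[OF r1] Phi'_reach[OF r2] Phi'_reach[OF r3] by simp
qed

lemma K: "(z,t1) \<in> P \<Longrightarrow> (Phi z t1, t2) \<in> P \<Longrightarrow> (z, t1+t2) \<in> P"
proof -
  assume a: "(z,t1) \<in> P" "(Phi z t1, t2) \<in> P"
  have "reach z (t1+t2) (Phi (Phi z t1) t2)" using reach.step[OF reach.base[OF a(1)] a(2)] .
  then have "(z, t1+t2) \<in> Q" by (auto simp: Q_def)
  then show ?thesis using maxP[OF Q_lifts] by blast
qed


end

context auxf begin
lemma Psi_seg: "0 \<le> t \<Longrightarrow> Psi y0' y t \<in> closed_segment y0' y"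
proof -
  assume t: "0 \<le> t"
  have "Psi y0' y t = (1 - exp (-t)) *\<^sub>R y0' + exp (-t) *\<^sub>R y"
    by (simp add: Psi_def algebra_simps)
  moreover have "0 \<le> exp (-t)" "exp (-t) \<le> 1" using t by auto
  ultimately show ?thesis unfolding closed_segment_def by blast
qed

lemma nonglobal:
  assumes xD: "x \<in> D" and T: "0 \<le> T" "(x,T) \<notin> P"
  shows "\<exists>\<omega>>0. (\<forall>t. 0 \<le> t \<and> t < \<omega> \<longrightarrow> (x,t) \<in> P) \<and> (\<forall>t\<ge>\<omega>. (x,t) \<notin> P)"
proof -
  define A where "A = {t. 0 \<le> t \<and> (x,t) \<in> P}"
  have A0: "0 \<in> A" using P_0[OF xD] by (simp add: A_def)
  have Ab: "t \<le> T" if "t \<in> A" for t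
  proof (rule ccontr)
    assume "\<not> t \<le> T"
    then have "T \<in> closed_segment 0 t" using T(1) by (auto simp: closed_segment_eq_real_ivl)
    then have "(x,T) \<in> P" using P_between that by (auto simp: A_def)
    then show False using T(2) by simp
  qed
  have bdd: "bdd_above A" using Ab by (auto simp: bdd_above_def)
  define \<omega> where "\<omega> = Sup A"
  have below: "(x,t) \<in> P" if t0: "0 \<le> t" and tw: "t < \<omega>" for t
  proof -
    obtain a where a: "a \<in> A" "t < a" using less_cSup_iff[of A t] A0 bdd tw \<omega>_def by blast
    then have "t \<in> closed_segment 0 a" using t0 by (auto simp: closed_segment_eq_real_ivl)
    then show ?thesis using P_between a(1) by (auto simp: A_def)
  qed
  have om0: "0 \<le> \<omega>" using cSup_upper[OF A0 bdd] \<omega>_def by simp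
  have above: "(x,t) \<notin> P" if "\<omega> \<le> t" for t
  proof
    assume xt: "(x,t) \<in> P"
    have "continuous_on UNIV (Pair x :: real \<Rightarrow> _)" by (intro continuous_intros)
    then have "open (Pair x -` P)" using open_vimage[OF P_open] by blast
    moreover have "Pair x -` P = {s. (x,s) \<in> P}" by auto
    ultimately have oS: "open {s. (x,s) \<in> P}" by simp
    then obtain e where e: "e > 0" "ball t e \<subseteq> {s. (x,s) \<in> P}"
      using xt open_contains_ball by blast
    have "t + e/2 \<in> ball t e" using e(1) by (simp add: dist_real_def)
    then have "(x, t + e/2) \<in> P" using e(2) by blast
    then have "t + e/2 \<in> A" using that om0 e(1) by (simp add: A_def)
    then have "t + e/2 \<le> \<omega>" using cSup_upper[OF _ bdd] \<omega>_def by blast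
    then show False using that e(1) by simp
  qed
  have "\<omega> > 0"
  proof (rule ccontr)
    assume "\<not> \<omega> > 0"
    then have "\<omega> \<le> 0" by simp
    then show False using above[of 0] P_0[OF xD] by simp
  qed
  then show ?thesis using below above by blast
qed

lemma no_limit:
  assumes xD: "x \<in> D" and om: "\<omega> > 0" "\<forall>t. 0 \<le> t \<and> t < \<omega> \<longrightarrow> (x,t) \<in> P" "\<forall>t\<ge>\<omega>. (x,t) \<notin> P"
    and tt: "\<forall>n. 0 \<le> tt n \<and> tt n < \<omega>" "tt \<longlonglongrightarrow> \<omega>"
    and lim: "(\<lambda>n. Phi x (tt n)) \<longlonglongrightarrow> p" and pD: "p \<in> D"
  shows False
proof -
  have p0: "(p,0) \<in> P" using P_0[OF pD] .
  obtain e where e: "e > 0" "ball (p,0) e \<subseteq> P" using open_contains_ball[THEN iffD1, OF P_open] p0 by blast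
  have e4: "e/4 > 0" using e(1) by simp
  have ev1: "eventually (\<lambda>n. dist (Phi x (tt n)) p < e/4) sequentially"
    using lim[unfolded tendsto_iff, rule_format, OF e4] .
  have ev2: "eventually (\<lambda>n. dist (tt n) \<omega> < e/4) sequentially"
    using tt(2)[unfolded tendsto_iff, rule_format, OF e4] .
  obtain N where N: "\<forall>n\<ge>N. dist (Phi x (tt n)) p < e/4 \<and> dist (tt n) \<omega> < e/4"
    using eventually_conj[OF ev1 ev2] unfolding eventually_sequentially by blast
  define n where "n = N"
  have n: "dist (Phi x (tt n)) p < e/4" "dist (tt n) \<omega> < e/4" using N by (auto simp: n_def)
  have "dist (Phi x (tt n), e/4) (p, 0) \<le> dist (Phi x (tt n)) p + dist (e/4) (0::real)"
    using sqrt_sum_squares_le_sum_abs[of "dist (Phi x (tt n)) p" "dist (e/4) (0::real)"] by (simp add: dist_Pair_Pair)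
  also have "\<dots> < e" using n(1) e(1) by (simp add: dist_real_def)
  finally have "(Phi x (tt n), e/4) \<in> ball (p,0) e" by (simp add: dist_commute)
  then have "(Phi x (tt n), e/4) \<in> P" using e(2) by blast
  moreover have "(x, tt n) \<in> P" using om(2) tt(1) by blast
  ultimately have "(x, tt n + e/4) \<in> P" using K by blast
  moreover have "tt n + e/4 \<ge> \<omega>" using n(2) unfolding dist_real_def by linarith
  ultimately show False using om(3) by blast
qed

lemma no_compact:
  assumes xD: "x \<in> D" and om: "\<omega> > 0" "\<forall>t. 0 \<le> t \<and> t < \<omega> \<longrightarrow> (x,t) \<in> P" "\<forall>t\<ge>\<omega>. (x,t) \<notin> P"
    and C: "compact C" "C \<subseteq> D" "\<forall>t. 0 \<le> t \<and> t < \<omega> \<longrightarrow> Phi x t \<in> C"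
  shows False
proof -
  define tt where "tt = (\<lambda>n. \<omega> - \<omega> * inverse (real (Suc n)))"
  have tt1: "0 \<le> tt n \<and> tt n < \<omega>" for n
  proof -
    have i1: "inverse (real (Suc n)) \<le> 1" by (simp add: inverse_le_1_iff)
    have i0: "inverse (real (Suc n)) > 0" by simp
    have "\<omega> * inverse (real (Suc n)) \<le> \<omega> * 1" using mult_left_mono[OF i1] om(1) by simp
    moreover have "\<omega> * inverse (real (Suc n)) > 0" using i0 om(1) by simp
    ultimately show ?thesis by (simp add: tt_def)
  qed
  have "(\<lambda>n. \<omega> - \<omega> * inverse (real (Suc n))) \<longlonglongrightarrow> \<omega> - \<omega> * 0"
    by (intro tendsto_intros LIMSEQ_inverse_real_of_nat)
  then have tt2: "tt \<longlonglongrightarrow> \<omega>" by (simp add: tt_def)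
  have seqC: "\<And>n. Phi x (tt n) \<in> C" using C(3) tt1 by blast
  have ex: "\<exists>l\<in>C. \<exists>r. strict_mono r \<and> ((\<lambda>n. Phi x (tt n)) \<circ> r) \<longlonglongrightarrow> l"
    by (rule C(1)[unfolded compact_def, rule_format, OF seqC])
  then obtain l r where lr: "l \<in> C" "strict_mono r" "((\<lambda>n. Phi x (tt n)) \<circ> r) \<longlonglongrightarrow> l"
    by blast
  have h1: "\<forall>n. 0 \<le> (tt \<circ> r) n \<and> (tt \<circ> r) n < \<omega>" using tt1 by simp
  have h2: "(tt \<circ> r) \<longlonglongrightarrow> \<omega>" using LIMSEQ_subseq_LIMSEQ[OF tt2 lr(2)] .
  have h3: "(\<lambda>n. Phi x ((tt \<circ> r) n)) \<longlonglongrightarrow> l" using lr(3) by (simp add: comp_def)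
  have h4: "l \<in> D" using lr(1) C(2) by blast
  show False using no_limit[OF xD om h1 h2 h3 h4] .
qed

lemma lyap_B:
  assumes k: "global_lyapunov D Phi P k" and xD: "x \<in> D"
  shows "\<exists>B. closed B \<and> bounded_in D B \<and> x \<in> B \<and> (\<forall>t\<ge>0. (x,t) \<in> P \<longrightarrow> Phi x t \<in> B)"
proof -
  define B0 where "B0 = {z\<in>D. k z \<le> k x + 1}"
  have "k x \<ge> 0" using k xD by (simp add: global_lyapunov_def)
  then have "bounded_in D B0" using k unfolding global_lyapunov_def coercive_on_def B0_def by simp
  then have b: "bounded B0" "closure B0 \<subseteq> D" by (auto simp: bounded_in_def)
  have sub: "Phi x t \<in> B0" if "t \<ge> 0" "(x,t) \<in> P" for t
  proof -
    have "k (Phi x t) \<le> k (Phi x 0)"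
      using k xD P_0[OF xD] that unfolding global_lyapunov_def by blast
    then show ?thesis using xD P_D2[OF that(2)] by (simp add: B0_def)
  qed
  have "x \<in> B0" using xD by (simp add: B0_def)
  then show ?thesis
    using b sub closure_subset[of B0]
    by (intro exI[of _ "closure B0"]) (auto simp: bounded_in_def bounded_closure)
qed

lemma glob_c: "cond_c D Phi P \<Longrightarrow> global_lyapunov D Phi P k \<Longrightarrow> x \<in> D \<Longrightarrow> 0 \<le> t \<Longrightarrow> (x,t) \<in> P"
proof -
  assume c: "cond_c D Phi P" and k: "global_lyapunov D Phi P k" and xD: "x \<in> D" and t: "0 \<le> t"
  obtain B where B: "closed B" "bounded_in D B" "x \<in> B" "\<forall>t\<ge>0. (x,t) \<in> P \<longrightarrow> Phi x t \<in> B"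
    using lyap_B[OF k xD] by blast
  have "\<forall>t>0. (x,t) \<in> P \<longrightarrow> Phi x t \<in> B" using B(4) by simp
  then have "{x} \<times> {0..} \<subseteq> P" using c B(1-3) unfolding cond_c_def by blast
  then show ?thesis using t by auto
qed

lemma glob_a1: "cond_a1 D f \<Longrightarrow> global_lyapunov D Phi P k \<Longrightarrow> x \<in> D \<Longrightarrow> 0 \<le> T \<Longrightarrow> (x,T) \<in> P"
proof (rule ccontr)
  assume c: "cond_a1 D f" and k: "global_lyapunov D Phi P k" and xD: "x \<in> D" and T: "0 \<le> T" "(x,T) \<notin> P"
  obtain \<omega> where om: "\<omega> > 0" "\<forall>t. 0 \<le> t \<and> t < \<omega> \<longrightarrow> (x,t) \<in> P" "\<forall>t\<ge>\<omega>. (x,t) \<notin> P"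
    using nonglobal[OF xD T] by blast
  obtain B where B: "closed B" "bounded_in D B" "x \<in> B" "\<forall>t\<ge>0. (x,t) \<in> P \<longrightarrow> Phi x t \<in> B"
    using lyap_B[OF k xD] by blast
  define C where "C = B \<inter> f -` closed_segment y0 (f x)"
  have "compact C" using c B(1,2) compact_segment unfolding cond_a1_def proper_on_def C_def by blast
  moreover have "C \<subseteq> D" using B(1,2) closure_closed[of B] by (auto simp: C_def bounded_in_def)
  moreover have "\<forall>t. 0 \<le> t \<and> t < \<omega> \<longrightarrow> Phi x t \<in> C"
  proof (intro allI impI)
    fix t assume t: "0 \<le> t \<and> t < \<omega>"
    then have xt: "(x,t) \<in> P" using om(2) by simp
    have "f (Phi x t) \<in> closed_segment y0 (f x)" using liftP[OF xt] Psi_seg[of t] t by simp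
    moreover have "Phi x t \<in> B" using B(4) xt t by simp
    ultimately show "Phi x t \<in> C" by (simp add: C_def)
  qed
  ultimately show False using no_compact[OF xD om] by blast
qed

lemma glob_b: "cond_b D f x0 \<Longrightarrow> global_lyapunov D Phi P k \<Longrightarrow> x \<in> D \<Longrightarrow> 0 \<le> T \<Longrightarrow> (x,T) \<in> P"
proof (rule ccontr)
  assume c: "cond_b D f x0" and k: "global_lyapunov D Phi P k" and xD: "x \<in> D" and T: "0 \<le> T" "(x,T) \<notin> P"
  obtain \<omega> where om: "\<omega> > 0" "\<forall>t. 0 \<le> t \<and> t < \<omega> \<longrightarrow> (x,t) \<in> P" "\<forall>t\<ge>\<omega>. (x,t) \<notin> P"
    using nonglobal[OF xD T] by blast
  obtain B where B: "closed B" "bounded_in D B" "x \<in> B" "\<forall>t\<ge>0. (x,t) \<in> P \<longrightarrow> Phi x t \<in> B"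
    using lyap_B[OF k xD] by blast
  define Z where "Z = {z\<in>D. f z \<in> closed_segment y0 (f x)} \<inter> B"
  define C where "C = connected_component_set Z x"
  have xZ: "x \<in> Z" using xD B(3) by (simp add: Z_def)
  have "C \<in> components Z" unfolding components_def C_def using xZ by blast
  then have cC: "compact C" using c B(1,2,3) unfolding cond_b_def Z_def by blast
  have CD: "C \<subseteq> D" using connected_component_subset[of Z x] by (auto simp: C_def Z_def)
  define Tr where "Tr = Phi x ` {0..<\<omega>}"
  have sub: "{0..<\<omega>} \<subseteq> {t. (x,t) \<in> P}" using om(2) by auto
  have cT: "connected Tr" unfolding Tr_def
    by (rule connected_continuous_image[OF cont_traj[OF sub]]) simp
  have "Phi x 0 \<in> Tr" using om(1) by (simp add: Tr_def)
  then have xT: "x \<in> Tr" using xD by simp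
  have TZ: "Tr \<subseteq> Z"
  proof
    fix z assume "z \<in> Tr"
    then obtain t where t: "t \<in> {0..<\<omega>}" "z = Phi x t" by (auto simp: Tr_def)
    then have xt: "(x,t) \<in> P" using om(2) by simp
    have "f z \<in> closed_segment y0 (f x)" using liftP[OF xt] Psi_seg[of t] t by simp
    moreover have "z \<in> D" using P_D2[OF xt] t by simp
    moreover have "z \<in> B" using B(4) xt t by simp
    ultimately show "z \<in> Z" by (simp add: Z_def)
  qed
  have "Tr \<subseteq> C" unfolding C_def using connected_component_maximal[OF xT cT TZ] .
  then have "\<forall>t. 0 \<le> t \<and> t < \<omega> \<longrightarrow> Phi x t \<in> C" by (auto simp: Tr_def)
  then show False using no_compact[OF xD om cC CD] by blast
qed

end

lemma T_exists:
  fixes a r :: real assumes r: "r > 0" and a: "a \<ge> 0"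
  shows "\<exists>T\<ge>0. exp (-T) * a < r"
proof (cases "a < r")
  case True then show ?thesis by (intro exI[of _ 0]) simp
next
  case False
  then have ar: "a \<ge> r" "a > 0" using r by auto
  define T where "T = ln (a/r) + 1"
  have "a / r \<ge> 1" using ar r by simp
  then have T0: "T \<ge> 0" unfolding T_def using ln_ge_zero by fastforce
  have "exp T = (a/r) * exp 1" unfolding T_def using ar r by (simp add: exp_add)
  then have "exp (-T) * a = r / exp 1" using ar r by (simp add: exp_minus field_simps)
  also have "\<dots> < r" using r by (simp add: field_simps)
  finally show ?thesis using T0 by blast
qed

lemma Psi_ball: "exp (-T) * norm (y - y0) < r \<Longrightarrow> Psi y0 y T \<in> ball y0 r"
  by (simp add: Psi_def dist_norm)

lemma Psi_ball2: "y \<in> ball y0 r \<Longrightarrow> 0 \<le> T \<Longrightarrow> Psi y0 y T \<in> ball y0 r"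
proof -
  assume y: "y \<in> ball y0 r" and T: "0 \<le> T"
  have "exp (-T) \<le> 1" using T by simp
  then have "exp (-T) * norm (y - y0) \<le> 1 * norm (y - y0)" by (rule mult_right_mono) simp
  also have "\<dots> < r" using y by (simp add: dist_norm norm_minus_commute)
  finally show ?thesis by (rule Psi_ball)
qed

context auxf begin

lemma main_from_global:
  assumes cD: "connected D" and G: "\<forall>x\<in>D. \<forall>t\<ge>0. (x,t) \<in> P"
  shows "inj_on f D \<and> (\<forall>y\<in>f ` D. closed_segment y0 y \<subseteq> f ` D)"
proof -
  have "\<exists>U g. open U \<and> x0 \<in> U \<and> U \<subseteq> D \<and> open (f ` U) \<and> homeomorphism U (f ` U) f g"
    using lh x0D unfolding local_homeo_def by (rule bspec)
  then obtain U g where U: "open U" "x0 \<in> U" "U \<subseteq> D" "open (f ` U)" and hU: "homeomorphism U (f ` U) f g"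
    by blast
  have gf: "g (f z) = z" if "z \<in> U" for z using homeomorphism_apply1[OF hU that] .
  have fg: "f (g y) = y" if "y \<in> f ` U" for y using homeomorphism_apply2[OF hU that] .
  have gU: "g y \<in> U" if "y \<in> f ` U" for y using homeomorphism_image2[OF hU] that by blast
  have gc: "continuous_on (f ` U) g" using homeomorphism_cont2[OF hU] .
  have fcU: "continuous_on U f" using homeomorphism_cont1[OF hU] .
  have "y0 \<in> f ` U" using U(2) by simp
  then obtain r where r: "r > 0" "ball y0 r \<subseteq> f ` U" using U(4) open_contains_ball by blast
  define V where "V = ball y0 r"
  define U' where "U' = g ` V"
  have VU: "V \<subseteq> f ` U" using r by (simp add: V_def)
  have U'_char: "z \<in> U' \<longleftrightarrow> z \<in> U \<and> f z \<in> V" for z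
  proof
    assume "z \<in> U'"
    then obtain y where y: "y \<in> V" "z = g y" by (auto simp: U'_def)
    then show "z \<in> U \<and> f z \<in> V" using gU fg VU by auto
  next
    assume "z \<in> U \<and> f z \<in> V"
    then show "z \<in> U'" using gf unfolding U'_def by (metis image_eqI)
  qed
  have U'D: "U' \<subseteq> D" using U'_char U(3) by blast
  have phic: "continuous_on D (\<lambda>z. Phi z T)" if "T \<ge> 0" for T
  proof -
    have "continuous_on D (\<lambda>z. (\<lambda>(x,t). Phi x t) (z, T))"
      by (rule continuous_on_compose2[OF P_cont]) (use G that in \<open>auto intro!: continuous_intros\<close>)
    then show ?thesis by simp
  qed
  have Inv: "Phi w t = g (Psi y0 (f w) t)" if w: "w \<in> U'" and t: "t \<ge> 0" for w t
  proof (rule lift_unique[OF lh, of "{0..t}" "Phi w" "\<lambda>u. g (Psi y0 (f w) u)" 0 t])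
    have wU: "w \<in> U" "f w \<in> V" using w U'_char by auto
    have wD: "w \<in> D" using wU U(3) by blast
    have PV: "Psi y0 (f w) u \<in> V" if "u \<in> {0..t}" for u using Psi_ball2[of "f w" y0 r u] wU that by (simp add: V_def)
    show "connected {0..t}" by simp
    show "continuous_on {0..t} (Phi w)" by (rule cont_traj) (use G wD in auto)
    have "continuous_on {0..t} (\<lambda>u. Psi y0 (f w) u)" unfolding Psi_def by (intro continuous_intros)
    then show "continuous_on {0..t} (\<lambda>u. g (Psi y0 (f w) u))"
      by (rule continuous_on_compose2[OF gc]) (use PV VU in auto)
    show "Phi w ` {0..t} \<subseteq> D" using G wD P_D2 by auto
    show "(\<lambda>u. g (Psi y0 (f w) u)) ` {0..t} \<subseteq> D" using PV VU gU U(3) by blast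
    show "\<forall>u\<in>{0..t}. f (Phi w u) = f (g (Psi y0 (f w) u))"
    proof
      fix u assume u: "u \<in> {0..t}"
      then have "(w,u) \<in> P" using G wD by auto
      moreover have "Psi y0 (f w) u \<in> f ` U" using PV[OF u] VU by blast
      ultimately show "f (Phi w u) = f (g (Psi y0 (f w) u))" by (simp add: liftP fg)
    qed
    show "0 \<in> {0..t}" "t \<in> {0..t}" using t by auto
    show "Phi w 0 = g (Psi y0 (f w) 0)" using wD gf wU by simp
  qed
  have Inv': "Phi w t \<in> U'" if "w \<in> U'" "t \<ge> 0" for w t
  proof -
    have "f w \<in> V" using that U'_char by auto
    then have "Psi y0 (f w) t \<in> V" using Psi_ball2 that(2) by (simp add: V_def)
    then show ?thesis using Inv[OF that] by (simp add: U'_def)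
  qed
  define S where "S = {x\<in>D. \<exists>t\<ge>0. Phi x t \<in> U'}"
  have SV: "u = g (f u)" if u: "u \<in> S" and fu: "f u \<in> V" for u
  proof -
    obtain t where t: "t \<ge> 0" "Phi u t \<in> U'" and uD: "u \<in> D" using u by (auto simp: S_def)
    define u' where "u' = g (f u)"
    have u'U': "u' \<in> U'" using fu by (simp add: U'_def u'_def)
    then have u'D: "u' \<in> D" using U'D by blast
    have fu': "f u' = f u" using fg fu VU by (auto simp: u'_def)
    have "Phi u t = g (f (Phi u t))" using t(2) U'_char gf by auto
    also have "\<dots> = g (Psi y0 (f u) t)" using liftP G uD t(1) by simp
    also have "\<dots> = Phi u' t" using Inv[OF u'U' t(1)] fu' by simp
    finally have eq: "Phi u t = Phi u' t" .
    have bk: "Phi (Phi z t) (-t) = z" if "z \<in> D" for z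
    proof -
      have "(z,t) \<in> P" "(z, t + -t) \<in> P" using G that t(1) P_0 by auto
      then show ?thesis using grp[of z t "-t"] that by simp
    qed
    show ?thesis using bk[OF uD] bk[OF u'D] eq by (simp add: u'_def)
  qed
  have Sfwd: "Phi z T \<in> S" if zS: "z \<in> S" and T0: "T \<ge> 0" for z T
  proof -
    obtain t where t: "t \<ge> 0" "Phi z t \<in> U'" and zD: "z \<in> D" using zS by (auto simp: S_def)
    have zT: "(z,T) \<in> P" "(z,t) \<in> P" using G zD t(1) T0 by auto
    have pD: "Phi z T \<in> D" using P_D2[OF zT(1)] .
    show ?thesis
    proof (cases "t \<le> T")
      case True
      have "(z, t + (T - t)) \<in> P" using zT by simp
      then have "Phi (Phi z t) (T - t) = Phi z T" using grp[OF zT(2)] by simp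
      moreover have "Phi (Phi z t) (T - t) \<in> U'" using Inv' t True by simp
      ultimately have "Phi (Phi z T) 0 \<in> U'" using pD by simp
      then show ?thesis using pD by (auto simp: S_def)
    next
      case False
      have "(z, T + (t - T)) \<in> P" using zT by simp
      then have "Phi (Phi z T) (t - T) = Phi z t" using grp[OF zT(1)] by simp
      then have "Phi (Phi z T) (t - T) \<in> U'" using t by simp
      then show ?thesis using pD False by (auto simp: S_def intro!: exI[of _ "t - T"])
    qed
  qed
  have x0S: "x0 \<in> S"
  proof -
    have "x0 \<in> U'" using U'_char U(2) r(1) by (simp add: V_def)
    then show ?thesis using x0D by (auto simp: S_def intro!: exI[of _ 0])
  qed
  have oU': "open U'"
  proof -
    have "open (f -` V \<inter> U)" using continuous_on_open_vimage[OF U(1), THEN iffD1, OF fcU, rule_format, of V] by (simp add: V_def)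
    moreover have "f -` V \<inter> U = U'" using U'_char by auto
    ultimately show ?thesis by simp
  qed
  have oS: "open S"
  proof (subst open_subopen, intro ballI)
    fix x assume "x \<in> S"
    then obtain t where t: "t \<ge> 0" "Phi x t \<in> U'" and xD: "x \<in> D" by (auto simp: S_def)
    define N where "N = (\<lambda>z. Phi z t) -` U' \<inter> D"
    have "open N" using continuous_on_open_vimage[OF oD, THEN iffD1, OF phic[OF t(1)], rule_format, OF oU'] unfolding N_def .
    moreover have "x \<in> N" using t xD by (simp add: N_def)
    moreover have "N \<subseteq> S" using t(1) by (auto simp: N_def S_def)
    ultimately show "\<exists>T. open T \<and> x \<in> T \<and> T \<subseteq> S" by blast
  qed
  have oDS: "open (D - S)"
  proof (subst open_subopen, intro ballI)
    fix x assume x: "x \<in> D - S"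
    obtain T where T: "T \<ge> 0" "exp (-T) * norm (f x - y0) < r" using T_exists[OF r(1) norm_ge_zero[of "f x - y0"]] by blast
    define W where "W = (\<lambda>z. Psi y0 (f z) T) -` V \<inter> D"
    have cPsi: "continuous_on D (\<lambda>z. Psi y0 (f z) T)" unfolding Psi_def by (intro continuous_intros fcont)
    have oW: "open W" using continuous_on_open_vimage[OF oD, THEN iffD1, OF cPsi, rule_format, of V] unfolding W_def V_def by simp
    have xW: "x \<in> W" using x Psi_ball[OF T(2)] by (simp add: W_def V_def)
    have WV: "Psi y0 (f z) T \<in> V" if "z \<in> W" for z using that by (simp add: W_def)
    define h where "h = (\<lambda>z. dist (Phi z T) (g (Psi y0 (f z) T)))"
    have ch: "continuous_on W h" unfolding h_def
    proof (intro continuous_on_dist)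
      show "continuous_on W (\<lambda>z. Phi z T)" using phic[OF T(1)] by (rule continuous_on_subset) (auto simp: W_def)
      show "continuous_on W (\<lambda>z. g (Psi y0 (f z) T))"
        by (rule continuous_on_compose2[OF gc continuous_on_subset[OF cPsi]]) (use WV VU in \<open>auto simp: W_def\<close>)
    qed
    have char: "z \<in> S \<longleftrightarrow> h z = 0" if "z \<in> W" for z
    proof
      assume zS: "z \<in> S"
      have zD: "z \<in> D" using that by (simp add: W_def)
      have fe: "f (Phi z T) = Psi y0 (f z) T" using liftP G zD T(1) by simp
      have "Phi z T = g (f (Phi z T))" by (rule SV[OF Sfwd[OF zS T(1)]]) (use fe WV[OF that] in simp)
      also have "\<dots> = g (Psi y0 (f z) T)" using fe by simp
      finally show "h z = 0" unfolding h_def by simp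
    next
      assume "h z = 0"
      then have "Phi z T = g (Psi y0 (f z) T)" by (simp add: h_def)
      then have "Phi z T \<in> U'" using WV[OF that] by (simp add: U'_def)
      then show "z \<in> S" using that T(1) by (auto simp: S_def W_def)
    qed
    define N where "N = h -` {0<..} \<inter> W"
    have "open N" using continuous_on_open_vimage[OF oW, THEN iffD1, OF ch, rule_format, of "{0<..}"] unfolding N_def by simp
    moreover have "x \<in> N" using char[OF xW] x xW by (auto simp: N_def h_def)
    moreover have "N \<subseteq> D - S" using char by (auto simp: N_def W_def)
    ultimately show "\<exists>T. open T \<and> x \<in> T \<and> T \<subseteq> D - S" by blast
  qed
  have SD: "D \<subseteq> S"
  proof -
    have "S \<inter> D \<noteq> {}" using x0S x0D by blast
    moreover have "S \<inter> (D - S) \<inter> D = {}" by blast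
    moreover have "D \<subseteq> S \<union> (D - S)" by blast
    ultimately have "(D - S) \<inter> D = {}"
      using connectedD[OF cD oS oDS] by blast
    then show ?thesis by blast
  qed
  have ptT: "Phi z T = g (Psi y0 (f z) T)" if "z \<in> D" "T \<ge> 0" "Psi y0 (f z) T \<in> V" for z T
  proof -
    have e1: "f (Phi z T) = Psi y0 (f z) T" using liftP G that by simp
    have e2: "Phi z T \<in> S" using SD P_D2 G that by blast
    have "Phi z T = g (f (Phi z T))" by (rule SV[OF e2]) (use e1 that(3) in simp)
    also have "\<dots> = g (Psi y0 (f z) T)" using e1 by simp
    finally show ?thesis .
  qed
  have inj: "inj_on f D"
  proof (rule inj_onI)
    fix x1 x2 assume x: "x1 \<in> D" "x2 \<in> D" "f x1 = f x2"
    obtain T where T: "T \<ge> 0" "exp (-T) * norm (f x1 - y0) < r" using T_exists[OF r(1) norm_ge_zero[of "f x1 - y0"]] by blast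
    have PV: "Psi y0 (f x1) T \<in> V" using Psi_ball[OF T(2)] by (simp add: V_def)
    have PV2: "Psi y0 (f x2) T \<in> V" using PV x(3) by simp
    have e1: "Phi x1 T = g (Psi y0 (f x1) T)" using ptT[OF x(1) T(1) PV] .
    have e2: "Phi x2 T = g (Psi y0 (f x2) T)" using ptT[OF x(2) T(1) PV2] .
    have eq: "Phi x1 T = Phi x2 T" using e1 e2 x(3) by metis
    have bk: "Phi (Phi z T) (-T) = z" if "z \<in> D" for z
    proof -
      have "(z,T) \<in> P" "(z, T + -T) \<in> P" using G that T(1) P_0 by auto
      then show ?thesis using grp[of z T "-T"] that by simp
    qed
    have "x1 = Phi (Phi x1 T) (-T)" using bk[OF x(1)] by (rule sym)
    also have "\<dots> = Phi (Phi x2 T) (-T)" using eq by (rule arg_cong)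
    also have "\<dots> = x2" using bk[OF x(2)] .
    finally show "x1 = x2" .
  qed
  have star: "closed_segment y0 y \<subseteq> f ` D" if yD: "y \<in> f ` D" for y
  proof
    fix z assume "z \<in> closed_segment y0 y"
    then obtain u where u: "0 \<le> u" "u \<le> 1" "z = (1 - u) *\<^sub>R y0 + u *\<^sub>R y"
      unfolding closed_segment_def by blast
    obtain x where x: "x \<in> D" "y = f x" using yD by blast
    show "z \<in> f ` D"
    proof (cases "u = 0")
      case True then show ?thesis using u x0D by simp
    next
      case False
      define T where "T = - ln u"
      have up: "u > 0" using False u by simp
      have T0: "T \<ge> 0" using up u(2) by (simp add: T_def)
      have "exp (-T) = u" using up by (simp add: T_def)
      then have "Psi y0 y T = z" using u by (simp add: Psi_def algebra_simps)
      moreover have "f (Phi x T) = Psi y0 y T" using liftP G x T0 by simp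
      moreover have "Phi x T \<in> D" using P_D2 G x T0 by blast
      ultimately show ?thesis by (metis image_eqI)
    qed
  qed
  show ?thesis using inj star by blast
qed

end

lemma Psi_deriv: "((\<lambda>s. Psi y0 y s) has_derivative (\<lambda>h. h *\<^sub>R (- exp (-t) *\<^sub>R (y - y0)))) (at t)"
  unfolding Psi_def by (auto intro!: derivative_eq_intros simp: fun_eq_iff algebra_simps)

context auxf begin

lemma glob_a2: "cond_a2 D f \<Longrightarrow> global_lyapunov D Phi P k \<Longrightarrow> x \<in> D \<Longrightarrow> 0 \<le> T \<Longrightarrow> (x,T) \<in> P"
proof (rule ccontr)
  assume c: "cond_a2 D f" and k: "global_lyapunov D Phi P k" and xD: "x \<in> D" and T: "0 \<le> T" "(x,T) \<notin> P"
  obtain \<omega> where om: "\<omega> > 0" "\<forall>t. 0 \<le> t \<and> t < \<omega> \<longrightarrow> (x,t) \<in> P" "\<forall>t\<ge>\<omega>. (x,t) \<notin> P"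
    using nonglobal[OF xD T] by blast
  obtain B where B: "closed B" "bounded_in D B" "x \<in> B" "\<forall>t\<ge>0. (x,t) \<in> P \<longrightarrow> Phi x t \<in> B"
    using lyap_B[OF k xD] by blast
  have BD: "B \<subseteq> D" using B(1,2) closure_closed[of B] by (auto simp: bounded_in_def)
  obtain f' where fd: "local_C1_diffeo D f f'" and Mb: "\<forall>B. closed B \<and> bounded_in D B \<longrightarrow>
        (\<exists>M. \<forall>x\<in>B. \<exists>L. L o\<^sub>L f' x = id_blinfun \<and> f' x o\<^sub>L L = id_blinfun \<and> norm L \<le> M)"
    using c unfolding cond_a2_def by blast
  obtain M where M: "\<forall>z\<in>B. \<exists>L. L o\<^sub>L f' z = id_blinfun \<and> f' z o\<^sub>L L = id_blinfun \<and> norm L \<le> M"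
    using Mb B(1,2) by blast
  define y where "y = f x"
  define C where "C = max M 0 * norm (y - y0)"
  have C0: "C \<ge> 0" by (simp add: C_def)
  have fder: "(f has_derivative blinfun_apply (f' z)) (at z)" if "z \<in> D" for z
    using fd that unfolding local_C1_diffeo_def C1_on_def by blast
  have N: "open {s. (x,s) \<in> P}"
  proof -
    have "continuous_on UNIV (Pair x :: real \<Rightarrow> _)" by (intro continuous_intros)
    then have "open (Pair x -` P)" using open_vimage[OF P_open] by blast
    moreover have "Pair x -` P = {s. (x,s) \<in> P}" by auto
    ultimately show ?thesis by simp
  qed
  have key: "\<exists>v. (Phi x has_derivative (\<lambda>h. h *\<^sub>R v)) (at t) \<and> norm v \<le> C" if t: "t \<in> {0..<\<omega>}" for t
  proof -
    have xt: "(x,t) \<in> P" using om(2) t by simp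
    define q where "q = Phi x t"
    have qB: "q \<in> B" using B(4) xt t by (simp add: q_def)
    then have qD: "q \<in> D" using BD by blast
    have "\<exists>U g g'. open U \<and> q \<in> U \<and> U \<subseteq> D \<and> open (f ` U)
        \<and> homeomorphism U (f ` U) f g \<and> C1_on (f ` U) g g'"
      using fd qD unfolding local_C1_diffeo_def by blast
    then obtain U g g' where U: "open U" "q \<in> U" "U \<subseteq> D" and hU: "homeomorphism U (f ` U) f g"
      and gC: "C1_on (f ` U) g g'" by blast
    have gf: "g (f z) = z" if "z \<in> U" for z using homeomorphism_apply1[OF hU that] .
    have fqU: "f q \<in> f ` U" using U(2) by simp
    have gder: "(g has_derivative blinfun_apply (g' (f q))) (at (f q))"
      using gC fqU unfolding C1_on_def by blast
    obtain L where L: "L o\<^sub>L f' q = id_blinfun" "f' q o\<^sub>L L = id_blinfun" "norm L \<le> M"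
      using M qB by blast
    have d1: "((\<lambda>z. g (f z)) has_derivative (\<lambda>h. g' (f q) (f' q h))) (at q)"
      using has_derivative_compose[OF fder[OF qD] gder] .
    have d2: "((\<lambda>z. g (f z)) has_derivative (\<lambda>h. h)) (at q)"
      by (rule has_derivative_transform_within_open[OF has_derivative_ident U(1) U(2)]) (simp add: gf)
    have inv: "(\<lambda>h. g' (f q) (f' q h)) = (\<lambda>h. h)" using has_derivative_unique[OF d1 d2] .
    have gL: "g' (f q) = L"
    proof (rule blinfun_eqI)
      fix h
      have "f' q (L h) = h" using arg_cong[OF L(2), of "\<lambda>F. blinfun_apply F h"] by simp
      then have "g' (f q) h = g' (f q) (f' q (L h))" by simp
      also have "\<dots> = L h" using fun_cong[OF inv, of "L h"] by simp
      finally show "g' (f q) h = L h" .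
    qed
    define w where "w = - exp (-t) *\<^sub>R (y - y0)"
    define v where "v = L w"
    have fq: "f q = Psi y0 y t" using liftP[OF xt] by (simp add: q_def y_def)
    have d3: "((\<lambda>s. g (Psi y0 y s)) has_derivative (\<lambda>h. g' (f q) (h *\<^sub>R w))) (at t)"
      using has_derivative_compose[OF Psi_deriv[of y0 y t] gder[unfolded fq]] fq by (simp add: w_def)
    define E where "E = Phi x -` U \<inter> {s. (x,s) \<in> P}"
    have cN: "continuous_on {s. (x,s) \<in> P} (Phi x)" by (rule cont_traj) simp
    have oE: "open E" using continuous_on_open_vimage[OF N, THEN iffD1, OF cN, rule_format, OF U(1)]
      unfolding E_def .
    have tE: "t \<in> E" using xt U(2) by (simp add: E_def q_def)
    have eqE: "g (Psi y0 y s) = Phi x s" if "s \<in> E" for s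
    proof -
      have "(x,s) \<in> P" "Phi x s \<in> U" using that by (auto simp: E_def)
      then show ?thesis using liftP gf y_def by metis
    qed
    have d4: "(Phi x has_derivative (\<lambda>h. g' (f q) (h *\<^sub>R w))) (at t)"
      using has_derivative_transform_within_open[OF d3 oE tE eqE] .
    have "(\<lambda>h. g' (f q) (h *\<^sub>R w)) = (\<lambda>h. h *\<^sub>R v)"
      by (simp add: gL v_def blinfun.scaleR_right)
    then have d5: "(Phi x has_derivative (\<lambda>h. h *\<^sub>R v)) (at t)" using d4 by simp
    have "norm v \<le> norm L * norm w" unfolding v_def by (rule norm_blinfun)
    also have "\<dots> \<le> max M 0 * norm (y - y0)"
    proof (rule mult_mono)
      show "norm L \<le> max M 0" using L(3) by simp
      have "exp (-t) \<le> 1" using t by simp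
      then show "norm w \<le> norm (y - y0)" unfolding w_def
        using mult_right_mono[of "exp (-t)" 1 "norm (y - y0)"] by simp
    qed auto
    finally show ?thesis using d5 by (auto simp: C_def)
  qed
  then obtain V where V: "\<forall>t\<in>{0..<\<omega>}. (Phi x has_derivative (\<lambda>h. h *\<^sub>R V t)) (at t) \<and> norm (V t) \<le> C"
    by metis
  have lip: "norm (Phi x s - Phi x t) \<le> C * norm (s - t)" if "s \<in> {0..<\<omega>}" "t \<in> {0..<\<omega>}" for s t
  proof (rule differentiable_bound[of "{0..<\<omega>}" "Phi x" "\<lambda>t h. h *\<^sub>R V t" C])
    show "convex {0..<\<omega>}" by simp
    show "(Phi x has_derivative (\<lambda>h. h *\<^sub>R V u)) (at u within {0..<\<omega>})" if "u \<in> {0..<\<omega>}" for u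
      using V that has_derivative_at_withinI by blast
    show "onorm (\<lambda>h. h *\<^sub>R V u) \<le> C" if "u \<in> {0..<\<omega>}" for u
    proof (rule onorm_bound[OF C0])
      fix h :: real
      have "norm (h *\<^sub>R V u) = \<bar>h\<bar> * norm (V u)" by simp
      also have "\<dots> \<le> \<bar>h\<bar> * C" using V that by (intro mult_left_mono) auto
      finally show "norm (h *\<^sub>R V u) \<le> C * norm h" by (simp add: mult.commute)
    qed
  qed (use that in auto)
  define tt where "tt = (\<lambda>n. \<omega> - \<omega> * inverse (real (Suc n)))"
  have tt1: "0 \<le> tt n \<and> tt n < \<omega>" for n
  proof -
    have i1: "inverse (real (Suc n)) \<le> 1" by (simp add: inverse_le_1_iff)
    have i0: "inverse (real (Suc n)) > 0" by simp
    have "\<omega> * inverse (real (Suc n)) \<le> \<omega> * 1" using mult_left_mono[OF i1] om(1) by simp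
    moreover have "\<omega> * inverse (real (Suc n)) > 0" using i0 om(1) by simp
    ultimately show ?thesis by (simp add: tt_def)
  qed
  have "(\<lambda>n. \<omega> - \<omega> * inverse (real (Suc n))) \<longlonglongrightarrow> \<omega> - \<omega> * 0"
    by (intro tendsto_intros LIMSEQ_inverse_real_of_nat)
  then have tt2: "tt \<longlonglongrightarrow> \<omega>" by (simp add: tt_def)
  then have ttC: "Cauchy tt" by (rule LIMSEQ_imp_Cauchy)
  have "Cauchy (\<lambda>n. Phi x (tt n))"
  proof (rule metric_CauchyI)
    fix e :: real assume e: "e > 0"
    have e': "e / (C + 1) > 0" using e C0 by simp
    obtain N where N: "\<forall>m\<ge>N. \<forall>n\<ge>N. dist (tt m) (tt n) < e / (C + 1)"
      using metric_CauchyD[OF ttC e'] by blast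
    show "\<exists>N. \<forall>m\<ge>N. \<forall>n\<ge>N. dist (Phi x (tt m)) (Phi x (tt n)) < e"
    proof (intro exI[of _ N] allI impI)
      fix m n assume mn: "N \<le> m" "N \<le> n"
      have "dist (Phi x (tt m)) (Phi x (tt n)) \<le> C * dist (tt m) (tt n)"
        using lip[of "tt m" "tt n"] tt1 by (simp add: dist_norm)
      also have "\<dots> \<le> C * (e / (C + 1))" using N mn C0 by (intro mult_left_mono) (auto intro: less_imp_le)
      also have "\<dots> < e" using e C0 by (simp add: field_simps)
      finally show "dist (Phi x (tt m)) (Phi x (tt n)) < e" .
    qed
  qed
  then obtain p where p: "(\<lambda>n. Phi x (tt n)) \<longlonglongrightarrow> p"
    using Cauchy_convergent_iff convergent_def by blast
  have "p \<in> B"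
    by (rule closed_sequentially[OF B(1) _ p]) (use B(4) tt1 om(2) in auto)
  then have pD: "p \<in> D" using BD by blast
  show False using no_limit[OF xD om _ tt2 p pD] tt1 by blast
qed

end

theorem proposition2p3:
  fixes D :: "'a::banach set" and f :: "'a \<Rightarrow> 'b::banach" and x0 :: 'a
    and Phi :: "'a \<Rightarrow> real \<Rightarrow> 'a" and DPhi :: "('a \<times> real) set"
  assumes "open D" and "connected D" and "x0 \<in> D"
    and "local_homeo D f"
    and "auxiliary_flow D f x0 Phi DPhi"
    and "\<exists>k. global_lyapunov D Phi DPhi k"
    and "cond_a1 D f \<or> cond_a2 D f \<or> cond_b D f x0 \<or> cond_c D Phi DPhi"
  shows "inj_on f D \<and> (\<forall>y\<in>f ` D. closed_segment (f x0) y \<subseteq> f ` D)"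
proof -
  interpret auxf D f x0 Phi DPhi
    using assms(1,3,4,5) by unfold_locales
  obtain k where k: "global_lyapunov D Phi DPhi k" using assms(6) by blast
  have G: "\<forall>x\<in>D. \<forall>t\<ge>0. (x,t) \<in> DPhi"
  proof (intro ballI allI impI)
    fix x and t :: real assume x: "x \<in> D" and t: "0 \<le> t"
    show "(x,t) \<in> DPhi"
      using assms(7) glob_a1[OF _ k x t] glob_a2[OF _ k x t] glob_b[OF _ k x t] glob_c[OF _ k x t] by blast
  qed
  show ?thesis using main_from_global[OF assms(2) G] .
qed

end
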